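(* Assume $b_1<n^*$ and $b_2<m^*$. Then every Nash equilibrium $(\sigma^{1*},\sigma^{2*})$ of $\Gamma(b_1,b_2)$ satisfies $|S|=b_1$ for all $S$ in the support of $\sigma^{1*}$ and $|T|=b_2$ for all $T$ in the support of $\sigma^{2*}$. Moreover, with $\overline{\mathcal A_1}=\{S\subseteq\mathcal V:|S|=b_1\}$ and $\overline{\mathcal A_2}=\{T\subseteq\mathcal E:|T|=b_2\}$, a strategy profile $(\sigma^1,\sigma^2)$ is a Nash equilibrium of $\Gamma(b_1,b_2)$ if and only if $\sigma^1\in\Delta(\overline{\mathcal A_1})$ is an optimal solution of $\max_{\sigma^1\in\Delta(\overline{\mathcal A_1})}\min_{T\in\overline{\mathcal A_2}}U_1(\sigma^1,T)$ and $\sigma^2\in\Delta(\overline{\mathcal A_2})$ is an optimal solution of $\min_{\sigma^2\in\Delta(\overline{\mathcal A_2})}\max_{S\in\overline{\mathcal A_1}}U_1(S,\sigma^2)$.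
   Context: Detection model: finite nonempty sets $\mathcal V$, $\mathcal E$, monitoring sets $\mathcal C_i\subseteq\mathcal E$ ($i\in\mathcal V$) with every $e\in\mathcal E$ in some $\mathcal C_i$; $\mathcal C_S=\bigcup_{i\in S}\mathcal C_i$; $F(S,T)=|\mathcal C_S\cap T|$. Set cover: $S\subseteq\mathcal V$ with $\mathcal C_S=\mathcal E$; $n^*$ = minimum size of a set cover. Set packing: $T\subseteq\mathcal E$ with $|\mathcal C_i\cap T|\le1$ for all $i$; $m^*$ = maximum size of a set packing. Game $\Gamma(b_1,b_2)$ ($b_1,b_2$ positive integers): $\mathcal A_1=\{S\subseteq\mathcal V:|S|\le b_1\}$, $\mathcal A_2=\{T\subseteq\mathcal E:|T|\le b_2\}$; mixed strategies $\sigma^1\in\Delta(\mathcal A_1)$, $\sigma^2\in\Delta(\mathcal A_2)$ (independent randomizations); payoffs $U_1(\sigma^1,\sigma^2)=\mathbb E[F(S,T)]$ and $U_2(\sigma^1,\sigma^2)=\mathbb E[|T|]-\mathbb E[F(S,T)]$; pure actions identified with point masses. A Nash equilibrium is a profile $(\sigma^{1*},\sigma^{2*})$ with $U_1(\sigma^{1*},\sigma^{2*})\ge U_1(\sigma^1,\sigma^{2*})$ for all $\sigma^1$ and $U_2(\sigma^{1*},\sigma^{2*})\ge U_2(\sigma^{1*},\sigma^2)$ for all $\sigma^2$. Distributions on $\overline{\mathcal A_j}\subseteq\mathcal A_j$ are viewed as elements of $\Delta(\mathcal A_j)$. *)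

theory Defs
  imports "HOL-Probability.Probability"
begin

definition CS :: "('v \<Rightarrow> 'e set) \<Rightarrow> 'v set \<Rightarrow> 'e set" where
  "CS C S = (\<Union>i\<in>S. C i)"

definition F :: "('v \<Rightarrow> 'e set) \<Rightarrow> 'v set \<Rightarrow> 'e set \<Rightarrow> nat" where
  "F C S T = card (CS C S \<inter> T)"

definition set_cover :: "'v set \<Rightarrow> 'e set \<Rightarrow> ('v \<Rightarrow> 'e set) \<Rightarrow> 'v set \<Rightarrow> bool" where
  "set_cover V E C S \<longleftrightarrow> S \<subseteq> V \<and> CS C S = E"

definition n_star :: "'v set \<Rightarrow> 'e set \<Rightarrow> ('v \<Rightarrow> 'e set) \<Rightarrow> nat" where
  "n_star V E C = Min {card S | S. set_cover V E C S}"

definition set_packing :: "'v set \<Rightarrow> 'e set \<Rightarrow> ('v \<Rightarrow> 'e set) \<Rightarrow> 'e set \<Rightarrow> bool" where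
  "set_packing V E C T \<longleftrightarrow> T \<subseteq> E \<and> (\<forall>i\<in>V. card (C i \<inter> T) \<le> 1)"

definition m_star :: "'v set \<Rightarrow> 'e set \<Rightarrow> ('v \<Rightarrow> 'e set) \<Rightarrow> nat" where
  "m_star V E C = Max {card T | T. set_packing V E C T}"

definition A1 :: "'v set \<Rightarrow> nat \<Rightarrow> 'v set set" where
  "A1 V b1 = {S. S \<subseteq> V \<and> card S \<le> b1}"

definition A2 :: "'e set \<Rightarrow> nat \<Rightarrow> 'e set set" where
  "A2 E b2 = {T. T \<subseteq> E \<and> card T \<le> b2}"

definition A1bar :: "'v set \<Rightarrow> nat \<Rightarrow> 'v set set" where
  "A1bar V b1 = {S. S \<subseteq> V \<and> card S = b1}"

definition A2bar :: "'e set \<Rightarrow> nat \<Rightarrow> 'e set set" where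
  "A2bar E b2 = {T. T \<subseteq> E \<and> card T = b2}"

text \<open>Mixed strategies are pmfs over actions; independent randomisation = product pmf.\<close>

definition U1 :: "('v \<Rightarrow> 'e set) \<Rightarrow> 'v set pmf \<Rightarrow> 'e set pmf \<Rightarrow> real" where
  "U1 C \<sigma>1 \<sigma>2 = measure_pmf.expectation (pair_pmf \<sigma>1 \<sigma>2) (\<lambda>(S, T). real (F C S T))"

definition U2 :: "('v \<Rightarrow> 'e set) \<Rightarrow> 'v set pmf \<Rightarrow> 'e set pmf \<Rightarrow> real" where
  "U2 C \<sigma>1 \<sigma>2 = measure_pmf.expectation (pair_pmf \<sigma>1 \<sigma>2) (\<lambda>(S, T). real (card T) - real (F C S T))"

definition nash :: "'v set \<Rightarrow> 'e set \<Rightarrow> ('v \<Rightarrow> 'e set) \<Rightarrow> nat \<Rightarrow> nat \<Rightarrow> 'v set pmf \<Rightarrow> 'e set pmf \<Rightarrow> bool" where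
  "nash V E C b1 b2 \<sigma>1 \<sigma>2 \<longleftrightarrow>
     set_pmf \<sigma>1 \<subseteq> A1 V b1 \<and> set_pmf \<sigma>2 \<subseteq> A2 E b2 \<and>
     (\<forall>\<tau>1. set_pmf \<tau>1 \<subseteq> A1 V b1 \<longrightarrow> U1 C \<tau>1 \<sigma>2 \<le> U1 C \<sigma>1 \<sigma>2) \<and>
     (\<forall>\<tau>2. set_pmf \<tau>2 \<subseteq> A2 E b2 \<longrightarrow> U2 C \<sigma>1 \<tau>2 \<le> U2 C \<sigma>1 \<sigma>2)"

definition maxmin_opt :: "'v set \<Rightarrow> 'e set \<Rightarrow> ('v \<Rightarrow> 'e set) \<Rightarrow> nat \<Rightarrow> nat \<Rightarrow> 'v set pmf \<Rightarrow> bool" where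
  "maxmin_opt V E C b1 b2 \<sigma>1 \<longleftrightarrow>
     set_pmf \<sigma>1 \<subseteq> A1bar V b1 \<and>
     (\<forall>\<tau>1. set_pmf \<tau>1 \<subseteq> A1bar V b1 \<longrightarrow>
        Min ((\<lambda>T. U1 C \<tau>1 (return_pmf T)) ` A2bar E b2)
          \<le> Min ((\<lambda>T. U1 C \<sigma>1 (return_pmf T)) ` A2bar E b2))"

definition minmax_opt :: "'v set \<Rightarrow> 'e set \<Rightarrow> ('v \<Rightarrow> 'e set) \<Rightarrow> nat \<Rightarrow> nat \<Rightarrow> 'e set pmf \<Rightarrow> bool" where
  "minmax_opt V E C b1 b2 \<sigma>2 \<longleftrightarrow>
     set_pmf \<sigma>2 \<subseteq> A2bar E b2 \<and>
     (\<forall>\<tau>2. set_pmf \<tau>2 \<subseteq> A2bar E b2 \<longrightarrow>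
        Max ((\<lambda>S. U1 C (return_pmf S) \<sigma>2) ` A1bar V b1)
          \<le> Max ((\<lambda>S. U1 C (return_pmf S) \<tau>2) ` A1bar V b1))"

end

theory Submission
  imports Defs
begin


lemma sep_reals:
  fixes P Q :: "real set"
  assumes "finite P" "finite Q" "\<forall>p\<in>P. \<forall>q\<in>Q. p < q"
  shows "\<exists>t. (\<forall>p\<in>P. p < t) \<and> (\<forall>q\<in>Q. t < q)"
proof (cases "P = {}")
  case True
  show ?thesis
  proof (cases "Q = {}")
    case True then show ?thesis using \<open>P = {}\<close> by auto
  next
    case False
    show ?thesis using \<open>P = {}\<close> assms(2) False
      by (intro exI[of _ "Min Q - 1"]) (auto dest: Min_le[OF assms(2)])
  qed
next
  case False
  show ?thesis
  proof (cases "Q = {}")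
    case True then show ?thesis using False assms(1)
      by (intro exI[of _ "Max P + 1"]) (auto dest: Max_ge[OF assms(1)])
  next
    case QF: False
    have "Max P < Min Q" using assms False QF by auto
    have "\<forall>p\<in>P. p \<le> Max P" "\<forall>q\<in>Q. Min Q \<le> q" using assms by auto
    then show ?thesis using \<open>Max P < Min Q\<close>
      by (intro exI[of _ "(Max P + Min Q)/2"]) force
  qed
qed

lemma alt1_transfer:
  fixes K K2 :: "('a \<Rightarrow> real) set"
  assumes fK: "finite K" and fK2: "finite K2"
    and comb: "\<forall>d\<in>K2. \<exists>\<mu>. (\<forall>c\<in>K. 0 \<le> \<mu> c) \<and> (\<exists>c\<in>K. 0 < \<mu> c) \<and> (\<forall>i\<in>A. d i = (\<Sum>c\<in>K. \<mu> c * c i))"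
    and y2: "\<forall>d\<in>K2. 0 \<le> y2 d" "\<exists>d\<in>K2. 0 < y2 d"
  shows "\<exists>y. (\<forall>c\<in>K. 0 \<le> y c) \<and> (\<exists>c\<in>K. 0 < y c) \<and> (\<forall>i\<in>A. (\<Sum>c\<in>K. y c * c i) = (\<Sum>d\<in>K2. y2 d * d i))"
proof -
  from comb obtain \<mu> where \<mu>: "\<forall>d\<in>K2. (\<forall>c\<in>K. 0 \<le> \<mu> d c) \<and> (\<exists>c\<in>K. 0 < \<mu> d c) \<and> (\<forall>i\<in>A. d i = (\<Sum>c\<in>K. \<mu> d c * c i))"
    by metis
  define y where "y c = (\<Sum>d\<in>K2. y2 d * \<mu> d c)" for c
  have nn: "\<forall>c\<in>K. 0 \<le> y c" unfolding y_def using \<mu> y2 by (auto intro!: sum_nonneg)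
  obtain d0 where d0: "d0 \<in> K2" "0 < y2 d0" using y2 by auto
  obtain c0 where c0: "c0 \<in> K" "0 < \<mu> d0 c0" using \<mu> d0 by auto
  have "y2 d0 * \<mu> d0 c0 \<le> y c0" unfolding y_def
    using \<mu> y2 c0 d0 fK2 by (intro member_le_sum[OF d0(1)]) (auto intro!: mult_nonneg_nonneg)
  moreover have "0 < y2 d0 * \<mu> d0 c0" using d0 c0 by simp
  ultimately have pos: "0 < y c0" by linarith
  have eq: "(\<Sum>c\<in>K. y c * c i) = (\<Sum>d\<in>K2. y2 d * d i)" if "i \<in> A" for i
  proof -
    have "(\<Sum>c\<in>K. y c * c i) = (\<Sum>c\<in>K. \<Sum>d\<in>K2. y2 d * (\<mu> d c * c i))"
      unfolding y_def by (simp add: sum_distrib_right mult.assoc)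
    also have "\<dots> = (\<Sum>d\<in>K2. \<Sum>c\<in>K. y2 d * (\<mu> d c * c i))" by (rule sum.swap)
    also have "\<dots> = (\<Sum>d\<in>K2. y2 d * d i)"
      using \<mu> that by (auto simp: sum_distrib_left[symmetric] intro!: sum.cong)
    finally show ?thesis .
  qed
  show ?thesis using nn pos c0 eq by blast
qed

lemma ville_set:
  fixes A :: "'a set" and K :: "('a \<Rightarrow> real) set"
  assumes "finite A" "finite K"
  shows "(\<exists>y. (\<forall>c\<in>K. 0 \<le> y c) \<and> (\<exists>c\<in>K. 0 < y c) \<and> (\<forall>i\<in>A. (\<Sum>c\<in>K. y c * c i) \<le> 0))
       \<or> (\<exists>x. (\<forall>i\<in>A. 0 \<le> x i) \<and> (\<forall>c\<in>K. 0 < (\<Sum>i\<in>A. x i * c i)))"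
  using assms
proof (induction A arbitrary: K rule: finite_induct)
  case empty
  show ?case
  proof (cases "K = {}")
    case True then show ?thesis by auto
  next
    case False then show ?thesis by (intro disjI1 exI[of _ "\<lambda>_. 1"]) auto
  qed
next
  case (insert a A K)
  define Kn where "Kn = {c\<in>K. c a \<le> 0}"
  define Kp where "Kp = {c\<in>K. 0 < c a}"
  define Km where "Km = {c\<in>K. c a < 0}"
  define g where "g = (\<lambda>(c::'a\<Rightarrow>real, d::'a\<Rightarrow>real). (\<lambda>i. c a * d i - d a * c i))"
  define K2 where "K2 = Kn \<union> g ` (Kp \<times> Km)"
  have fin: "finite Kn" "finite Kp" "finite Km" using insert.prems unfolding Kn_def Kp_def Km_def by auto
  have fK2: "finite K2" unfolding K2_def using fin by auto
  have K2a: "\<forall>d\<in>K2. d a \<le> 0" unfolding K2_def g_def Kn_def by auto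
  from insert.IH[OF fK2] show ?case
  proof
    assume "\<exists>y. (\<forall>c\<in>K2. 0 \<le> y c) \<and> (\<exists>c\<in>K2. 0 < y c) \<and> (\<forall>i\<in>A. (\<Sum>c\<in>K2. y c * c i) \<le> 0)"
    then obtain y2 where y2: "\<forall>c\<in>K2. 0 \<le> y2 c" "\<exists>c\<in>K2. 0 < y2 c" "\<forall>i\<in>A. (\<Sum>c\<in>K2. y2 c * c i) \<le> 0"
      by blast
    have comb: "\<forall>d\<in>K2. \<exists>\<mu>. (\<forall>c\<in>K. 0 \<le> \<mu> c) \<and> (\<exists>c\<in>K. 0 < \<mu> c) \<and> (\<forall>i\<in>insert a A. d i = (\<Sum>c\<in>K. \<mu> c * c i))"
    proof
      fix d assume "d \<in> K2"
      then consider "d \<in> Kn" | c e where "c \<in> Kp" "e \<in> Km" "d = g (c, e)" unfolding K2_def by auto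
      then show "\<exists>\<mu>. (\<forall>c\<in>K. 0 \<le> \<mu> c) \<and> (\<exists>c\<in>K. 0 < \<mu> c) \<and> (\<forall>i\<in>insert a A. d i = (\<Sum>c\<in>K. \<mu> c * c i))"
      proof cases
        case 1
        then have dK: "d \<in> K" unfolding Kn_def by auto
        show ?thesis
          using dK insert.prems
          by (intro exI[of _ "\<lambda>c. if c = d then 1 else 0"])
             (auto simp: if_distrib[of "\<lambda>x. x * _"] sum.delta cong: if_cong)
      next
        case 2
        then have cK: "c \<in> K" "e \<in> K" "0 < c a" "e a < 0" unfolding Kp_def Km_def by auto
        then have ne: "c \<noteq> e" by auto
        define \<mu> where "\<mu> = (\<lambda>x. (if x = e then c a else 0) + (if x = c then - e a else 0))"
        have "d i = (\<Sum>x\<in>K. \<mu> x * x i)" for i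
        proof -
          have "(\<Sum>x\<in>K. \<mu> x * x i) = (\<Sum>x\<in>K. (if x = e then c a * x i else 0)) + (\<Sum>x\<in>K. (if x = c then - e a * x i else 0))"
            unfolding \<mu>_def by (simp add: distrib_right sum.distrib if_distrib[of "\<lambda>x. x * _"] cong: if_cong)
          also have "\<dots> = c a * e i - e a * c i" using cK insert.prems by (simp add: sum.delta)
          finally show ?thesis using 2 unfolding g_def by simp
        qed
        moreover have "\<forall>x\<in>K. 0 \<le> \<mu> x" unfolding \<mu>_def using cK by auto
        moreover have "0 < \<mu> e" unfolding \<mu>_def using cK ne by auto
        ultimately show ?thesis using cK by blast
      qed
    qed
    obtain y where y: "\<forall>c\<in>K. 0 \<le> y c" "\<exists>c\<in>K. 0 < y c"
      "\<forall>i\<in>insert a A. (\<Sum>c\<in>K. y c * c i) = (\<Sum>d\<in>K2. y2 d * d i)"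
      using alt1_transfer[OF insert.prems fK2 comb y2(1,2)] by blast
    have "(\<Sum>d\<in>K2. y2 d * d a) \<le> 0" using y2(1) K2a by (intro sum_nonpos) (simp add: mult_nonneg_nonpos)
    then have "\<forall>i\<in>insert a A. (\<Sum>c\<in>K. y c * c i) \<le> 0" using y(3) y2(3) by auto
    then show ?thesis using y(1,2) by blast
  next
    assume "\<exists>x. (\<forall>i\<in>A. 0 \<le> x i) \<and> (\<forall>c\<in>K2. 0 < (\<Sum>i\<in>A. x i * c i))"
    then obtain x where x: "\<forall>i\<in>A. 0 \<le> x i" "\<forall>c\<in>K2. 0 < (\<Sum>i\<in>A. x i * c i)" by blast
    define L where "L c = (\<Sum>i\<in>A. x i * c i)" for c :: "'a \<Rightarrow> real"
    have Ln: "\<forall>c\<in>Kn. 0 < L c" using x(2) unfolding K2_def L_def by auto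
    have Lpm: "0 < c a * L e - e a * L c" if "c \<in> Kp" "e \<in> Km" for c e
    proof -
      have "g (c, e) \<in> K2" unfolding K2_def using that by auto
      then have "0 < (\<Sum>i\<in>A. x i * (c a * e i - e a * c i))" using x(2) unfolding g_def by auto
      also have "(\<Sum>i\<in>A. x i * (c a * e i - e a * c i)) = c a * L e - e a * L c"
        unfolding L_def by (simp add: algebra_simps sum_subtractf sum_distrib_left)
      finally show ?thesis .
    qed
    define P where "P = insert 0 ((\<lambda>c. - L c / c a) ` Kp)"
    define Q where "Q = (\<lambda>e. L e / (- e a)) ` Km"
    have PQ: "\<forall>p\<in>P. \<forall>q\<in>Q. p < q"
    proof (intro ballI)
      fix p q assume "p \<in> P" "q \<in> Q"
      then obtain e where e: "e \<in> Km" "q = L e / (- e a)" unfolding Q_def by auto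
      have ea: "e a < 0" and eKn: "e \<in> Kn" using e unfolding Km_def Kn_def by auto
      have "0 < L e" using Ln eKn by auto
      moreover have "0 < - e a" using ea by simp
      ultimately have q0: "0 < q" unfolding e(2) by (rule divide_pos_pos)
      show "p < q"
      proof (cases "p = 0")
        case True then show ?thesis using q0 by simp
      next
        case False
        then obtain c where c: "c \<in> Kp" "p = - L c / c a" using \<open>p \<in> P\<close> unfolding P_def by auto
        have ca: "0 < c a" using c unfolding Kp_def by auto
        have "0 < c a * L e - e a * L c" using Lpm c e by auto
        then have "- L c * (- e a) < L e * c a" by (simp add: algebra_simps)
        have "0 < c a * (- e a)" using ca ea by (simp add: mult_pos_neg)
        have pc: "p * c a = - L c" using c ca by simp
        have qe: "q * (- e a) = L e" using e ea by simp
        have "p * (c a * (- e a)) = L c * e a" using pc by (simp add: mult.assoc[symmetric])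
        moreover have "q * (c a * (- e a)) = L e * c a" using qe
          by (metis mult.assoc mult.commute)
        ultimately have "p * (c a * (- e a)) < q * (c a * (- e a))"
          using \<open>- L c * (- e a) < L e * c a\<close> by simp
        then show ?thesis using \<open>0 < c a * (- e a)\<close> by (simp add: mult_less_cancel_right)
      qed
    qed
    have "finite P" "finite Q" unfolding P_def Q_def using fin by auto
    from sep_reals[OF this PQ] obtain t where t: "\<forall>p\<in>P. p < t" "\<forall>q\<in>Q. t < q" by blast
    have t0: "0 < t" using t unfolding P_def by auto
    define x' where "x' = x(a := t)"
    have sx: "(\<Sum>i\<in>insert a A. x' i * c i) = t * c a + L c" for c
      unfolding x'_def L_def using insert.hyps by (simp add: sum.insert) (intro sum.cong, auto)
    have "\<forall>c\<in>K. 0 < (\<Sum>i\<in>insert a A. x' i * c i)"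
    proof
      fix c assume cK: "c \<in> K"
      consider "0 < c a" | "c a = 0" | "c a < 0" by linarith
      then show "0 < (\<Sum>i\<in>insert a A. x' i * c i)"
      proof cases
        case 1
        then have "- L c / c a \<in> P" unfolding P_def Kp_def using cK by auto
        then have "- L c / c a < t" using t by auto
        then have "0 < t * c a + L c" using 1 by (simp add: divide_simps)
        then show ?thesis using sx by simp
      next
        case 2
        then have "c \<in> Kn" unfolding Kn_def using cK by auto
        then show ?thesis using sx Ln 2 by simp
      next
        case 3
        then have "L c / (- c a) \<in> Q" unfolding Q_def Km_def using cK by auto
        then have "t < L c / (- c a)" using t by auto
        then have "0 < t * c a + L c" using 3 by (simp add: divide_simps)
        then show ?thesis using sx by simp
      qed
    qed
    moreover have "\<forall>i\<in>insert a A. 0 \<le> x' i" unfolding x'_def using x(1) t0 by auto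
    ultimately show ?thesis by blast
  qed
qed

lemma ville_idx:
  fixes M :: "'i \<Rightarrow> 'j \<Rightarrow> real"
  assumes fI: "finite I" and fJ: "finite J" and J0: "J \<noteq> {}"
  shows "(\<exists>y. (\<forall>j\<in>J. 0 \<le> y j) \<and> (\<Sum>j\<in>J. y j) = 1 \<and> (\<forall>i\<in>I. (\<Sum>j\<in>J. y j * M i j) \<le> 0))
       \<or> (\<exists>x. (\<forall>i\<in>I. 0 \<le> x i) \<and> (\<Sum>i\<in>I. x i) = 1 \<and> (\<forall>j\<in>J. 0 < (\<Sum>i\<in>I. x i * M i j)))"
proof -
  define col where "col j = (\<lambda>i. M i j)" for j
  define K where "K = col ` J"
  have fK: "finite K" unfolding K_def using fJ by auto
  from ville_set[OF fI fK] show ?thesis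
  proof
    assume "\<exists>y. (\<forall>c\<in>K. 0 \<le> y c) \<and> (\<exists>c\<in>K. 0 < y c) \<and> (\<forall>i\<in>I. (\<Sum>c\<in>K. y c * c i) \<le> 0)"
    then obtain y where y: "\<forall>c\<in>K. 0 \<le> y c" "\<exists>c\<in>K. 0 < y c" "\<forall>i\<in>I. (\<Sum>c\<in>K. y c * c i) \<le> 0"
      by blast
    define n where "n c = card {j\<in>J. col j = c}" for c
    define y' where "y' j = y (col j) / n (col j)" for j
    have key: "(\<Sum>j\<in>J. y' j * h (col j)) = (\<Sum>c\<in>K. y c * h c)" for h :: "('i \<Rightarrow> real) \<Rightarrow> real"
    proof -
      have "(\<Sum>j\<in>J. y' j * h (col j)) = (\<Sum>c\<in>K. \<Sum>j\<in>{j\<in>J. col j = c}. y' j * h (col j))"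
        unfolding K_def by (rule sum.image_gen[OF fJ])
      also have "\<dots> = (\<Sum>c\<in>K. y c * h c)"
      proof (rule sum.cong[OF refl])
        fix c assume "c \<in> K"
        then have np: "0 < n c" unfolding n_def K_def using fJ by (auto simp: card_gt_0_iff)
        have "(\<Sum>j\<in>{j\<in>J. col j = c}. y' j * h (col j)) = (\<Sum>j\<in>{j\<in>J. col j = c}. y c / n c * h c)"
          unfolding y'_def by (rule sum.cong) auto
        also have "\<dots> = n c * (y c / n c * h c)" unfolding n_def by simp
        also have "\<dots> = y c * h c" using np by simp
        finally show "(\<Sum>j\<in>{j\<in>J. col j = c}. y' j * h (col j)) = y c * h c" .
      qed
      finally show ?thesis .
    qed
    define s where "s = (\<Sum>j\<in>J. y' j)"
    have "s = (\<Sum>c\<in>K. y c)" unfolding s_def using key[of "\<lambda>_. 1"] by simp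
    moreover have "0 < (\<Sum>c\<in>K. y c)"
    proof -
      obtain c where "c \<in> K" "0 < y c" using y by auto
      moreover have "y c \<le> (\<Sum>c\<in>K. y c)" using y(1) fK \<open>c \<in> K\<close> by (intro member_le_sum) auto
      ultimately show ?thesis by linarith
    qed
    ultimately have s0: "0 < s" by simp
    have y'0: "\<forall>j\<in>J. 0 \<le> y' j" unfolding y'_def K_def using y(1) unfolding K_def by auto
    have rows: "\<forall>i\<in>I. (\<Sum>j\<in>J. y' j / s * M i j) \<le> 0"
    proof
      fix i assume "i \<in> I"
      have "(\<Sum>j\<in>J. y' j * M i j) = (\<Sum>c\<in>K. y c * c i)" using key[of "\<lambda>c. c i"] unfolding col_def by simp
      then have "(\<Sum>j\<in>J. y' j * M i j) \<le> 0" using y(3) \<open>i \<in> I\<close> by simp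
      then have "(\<Sum>j\<in>J. y' j * M i j) / s \<le> 0" using s0 by (simp add: divide_nonpos_pos)
      then show "(\<Sum>j\<in>J. y' j / s * M i j) \<le> 0" by (simp add: sum_divide_distrib)
    qed
    have "(\<Sum>j\<in>J. y' j / s) = 1" using s0 unfolding s_def by (simp add: sum_divide_distrib[symmetric])
    then show ?thesis using rows y'0 s0 by (intro disjI1 exI[of _ "\<lambda>j. y' j / s"]) auto
  next
    assume "\<exists>x. (\<forall>i\<in>I. 0 \<le> x i) \<and> (\<forall>c\<in>K. 0 < (\<Sum>i\<in>I. x i * c i))"
    then obtain x where x: "\<forall>i\<in>I. 0 \<le> x i" "\<forall>c\<in>K. 0 < (\<Sum>i\<in>I. x i * c i)" by blast
    have cols: "\<forall>j\<in>J. 0 < (\<Sum>i\<in>I. x i * M i j)" using x(2) unfolding K_def col_def by auto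
    define s where "s = (\<Sum>i\<in>I. x i)"
    have s0: "0 < s"
    proof (rule ccontr)
      assume "\<not> 0 < s"
      moreover have "0 \<le> s" unfolding s_def using x(1) by (auto intro: sum_nonneg)
      ultimately have "s = 0" by simp
      then have "\<forall>i\<in>I. x i = 0" unfolding s_def using x(1) fI by (simp add: sum_nonneg_eq_0_iff)
      moreover obtain j where "j \<in> J" using J0 by auto
      ultimately show False using cols by auto
    qed
    have "\<forall>j\<in>J. 0 < (\<Sum>i\<in>I. x i / s * M i j)"
    proof
      fix j assume "j \<in> J"
      then have "0 < (\<Sum>i\<in>I. x i * M i j) / s" using cols s0 by simp
      then show "0 < (\<Sum>i\<in>I. x i / s * M i j)" by (simp add: sum_divide_distrib)
    qed
    moreover have "(\<Sum>i\<in>I. x i / s) = 1" using s0 unfolding s_def by (simp add: sum_divide_distrib[symmetric])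
    ultimately show ?thesis using x(1) s0 by (intro disjI2 exI[of _ "\<lambda>i. x i / s"]) auto
  qed
qed

lemma pmf_from_weights:
  assumes fJ: "finite J" and nn: "\<forall>j\<in>J. 0 \<le> y j" and s1: "(\<Sum>j\<in>J. y j) = 1"
  shows "\<exists>\<tau>. set_pmf \<tau> \<subseteq> J \<and> (\<forall>j\<in>J. pmf \<tau> j = y j)"
proof -
  define f where "f j = (if j \<in> J then y j else 0)" for j
  have f0: "\<And>x. 0 \<le> f x" unfolding f_def using nn by auto
  have "(\<integral>\<^sup>+x. ennreal (f x) \<partial>count_space UNIV) = (\<Sum>x\<in>J. ennreal (f x))"
    by (rule nn_integral_count_space'[OF fJ]) (auto simp: f_def)
  also have "\<dots> = ennreal (\<Sum>x\<in>J. f x)" using f0 by (simp add: sum_ennreal)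
  also have "(\<Sum>x\<in>J. f x) = 1" using s1 unfolding f_def by simp
  finally have p: "(\<integral>\<^sup>+x. ennreal (f x) \<partial>count_space UNIV) = 1" by simp
  have "pmf (embed_pmf f) x = f x" for x using pmf_embed_pmf[OF f0 p] .
  moreover have "set_pmf (embed_pmf f) \<subseteq> J" using set_embed_pmf[OF f0 p] unfolding f_def by auto
  ultimately show ?thesis by (intro exI[of _ "embed_pmf f"]) (auto simp: f_def)
qed



lemma U1_sum:
  assumes "finite SA" "finite TA" "set_pmf \<sigma>1 \<subseteq> SA" "set_pmf \<sigma>2 \<subseteq> TA"
  shows "U1 C \<sigma>1 \<sigma>2 = (\<Sum>S\<in>SA. \<Sum>T\<in>TA. pmf \<sigma>1 S * pmf \<sigma>2 T * real (F C S T))"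
proof -
  have "U1 C \<sigma>1 \<sigma>2 = (\<Sum>a\<in>SA \<times> TA. (\<lambda>(S, T). real (F C S T)) a * pmf (pair_pmf \<sigma>1 \<sigma>2) a)"
    unfolding U1_def using assms by (intro integral_measure_pmf_real) auto
  also have "\<dots> = (\<Sum>(S, T)\<in>SA \<times> TA. pmf \<sigma>1 S * pmf \<sigma>2 T * real (F C S T))"
    by (rule sum.cong) (auto simp: pmf_pair)
  also have "\<dots> = (\<Sum>S\<in>SA. \<Sum>T\<in>TA. pmf \<sigma>1 S * pmf \<sigma>2 T * real (F C S T))"
    by (rule sum.cartesian_product[symmetric])
  finally show ?thesis .
qed

lemma U2_sum:
  assumes "finite SA" "finite TA" "set_pmf \<sigma>1 \<subseteq> SA" "set_pmf \<sigma>2 \<subseteq> TA"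
  shows "U2 C \<sigma>1 \<sigma>2 = (\<Sum>S\<in>SA. \<Sum>T\<in>TA. pmf \<sigma>1 S * pmf \<sigma>2 T * (real (card T) - real (F C S T)))"
proof -
  have "U2 C \<sigma>1 \<sigma>2 = (\<Sum>a\<in>SA \<times> TA. (\<lambda>(S, T). real (card T) - real (F C S T)) a * pmf (pair_pmf \<sigma>1 \<sigma>2) a)"
    unfolding U2_def using assms by (intro integral_measure_pmf_real) auto
  also have "\<dots> = (\<Sum>(S, T)\<in>SA \<times> TA. pmf \<sigma>1 S * pmf \<sigma>2 T * (real (card T) - real (F C S T)))"
    by (rule sum.cong) (auto simp: pmf_pair)
  also have "\<dots> = (\<Sum>S\<in>SA. \<Sum>T\<in>TA. pmf \<sigma>1 S * pmf \<sigma>2 T * (real (card T) - real (F C S T)))"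
    by (rule sum.cartesian_product[symmetric])
  finally show ?thesis .
qed

lemma U1_ret1:
  assumes "finite TA" "set_pmf \<sigma>2 \<subseteq> TA"
  shows "U1 C (return_pmf S) \<sigma>2 = (\<Sum>T\<in>TA. pmf \<sigma>2 T * real (F C S T))"
  using U1_sum[of "{S}" TA "return_pmf S" \<sigma>2 C] assms by simp

lemma U1_ret2:
  assumes "finite SA" "set_pmf \<sigma>1 \<subseteq> SA"
  shows "U1 C \<sigma>1 (return_pmf T) = (\<Sum>S\<in>SA. pmf \<sigma>1 S * real (F C S T))"
  using U1_sum[of SA "{T}" \<sigma>1 "return_pmf T" C] assms by simp

lemma U1_avg1:
  assumes "finite SA" "finite TA" "set_pmf \<sigma>1 \<subseteq> SA" "set_pmf \<sigma>2 \<subseteq> TA"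
  shows "U1 C \<sigma>1 \<sigma>2 = (\<Sum>S\<in>SA. pmf \<sigma>1 S * U1 C (return_pmf S) \<sigma>2)"
proof -
  have r: "U1 C (return_pmf S) \<sigma>2 = (\<Sum>T\<in>TA. pmf \<sigma>2 T * real (F C S T))" for S
    using assms(2,4) by (rule U1_ret1)
  show ?thesis unfolding U1_sum[OF assms] r by (simp add: sum_distrib_left mult_ac)
qed

lemma U1_avg2:
  assumes "finite SA" "finite TA" "set_pmf \<sigma>1 \<subseteq> SA" "set_pmf \<sigma>2 \<subseteq> TA"
  shows "U1 C \<sigma>1 \<sigma>2 = (\<Sum>T\<in>TA. pmf \<sigma>2 T * U1 C \<sigma>1 (return_pmf T))"
proof -
  have "U1 C \<sigma>1 \<sigma>2 = (\<Sum>S\<in>SA. \<Sum>T\<in>TA. pmf \<sigma>1 S * pmf \<sigma>2 T * real (F C S T))"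
    using assms by (rule U1_sum)
  also have "\<dots> = (\<Sum>T\<in>TA. \<Sum>S\<in>SA. pmf \<sigma>1 S * pmf \<sigma>2 T * real (F C S T))" by (rule sum.swap)
  also have "\<dots> = (\<Sum>T\<in>TA. pmf \<sigma>2 T * (\<Sum>S\<in>SA. pmf \<sigma>1 S * real (F C S T)))"
    by (simp add: sum_distrib_left mult_ac)
  finally show ?thesis using assms by (simp add: U1_ret2)
qed

lemma U2_avg2:
  assumes "finite SA" "finite TA" "set_pmf \<sigma>1 \<subseteq> SA" "set_pmf \<sigma>2 \<subseteq> TA"
  shows "U2 C \<sigma>1 \<sigma>2 = (\<Sum>T\<in>TA. pmf \<sigma>2 T * U2 C \<sigma>1 (return_pmf T))"
proof -
  have "U2 C \<sigma>1 (return_pmf T) = (\<Sum>S\<in>SA. pmf \<sigma>1 S * (real (card T) - real (F C S T)))" for T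
    using U2_sum[of SA "{T}" \<sigma>1 "return_pmf T" C] assms by simp
  note r = this
  have "U2 C \<sigma>1 \<sigma>2 = (\<Sum>S\<in>SA. \<Sum>T\<in>TA. pmf \<sigma>1 S * pmf \<sigma>2 T * (real (card T) - real (F C S T)))"
    using assms by (rule U2_sum)
  also have "\<dots> = (\<Sum>T\<in>TA. \<Sum>S\<in>SA. pmf \<sigma>1 S * pmf \<sigma>2 T * (real (card T) - real (F C S T)))" by (rule sum.swap)
  also have "\<dots> = (\<Sum>T\<in>TA. pmf \<sigma>2 T * (\<Sum>S\<in>SA. pmf \<sigma>1 S * (real (card T) - real (F C S T))))"
    by (simp add: sum_distrib_left mult_ac)
  finally show ?thesis by (simp add: r)
qed

lemma U2_eq:
  assumes "finite SA" "finite TA" "set_pmf \<sigma>1 \<subseteq> SA" "set_pmf \<sigma>2 \<subseteq> TA"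
  shows "U2 C \<sigma>1 \<sigma>2 = (\<Sum>T\<in>TA. pmf \<sigma>2 T * real (card T)) - U1 C \<sigma>1 \<sigma>2"
proof -
  have s1: "(\<Sum>S\<in>SA. pmf \<sigma>1 S) = 1" using assms by (simp add: sum_pmf_eq_1)
  have "U2 C \<sigma>1 \<sigma>2 = (\<Sum>S\<in>SA. \<Sum>T\<in>TA. pmf \<sigma>1 S * pmf \<sigma>2 T * real (card T)) - U1 C \<sigma>1 \<sigma>2"
    using assms by (simp add: U2_sum U1_sum right_diff_distrib sum_subtractf)
  also have "(\<Sum>S\<in>SA. \<Sum>T\<in>TA. pmf \<sigma>1 S * pmf \<sigma>2 T * real (card T)) = (\<Sum>S\<in>SA. pmf \<sigma>1 S) * (\<Sum>T\<in>TA. pmf \<sigma>2 T * real (card T))"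
    by (simp add: sum_product mult_ac)
  finally show ?thesis using s1 by simp
qed

lemma U2_ret2:
  assumes "finite SA" "set_pmf \<sigma>1 \<subseteq> SA"
  shows "U2 C \<sigma>1 (return_pmf T) = real (card T) - U1 C \<sigma>1 (return_pmf T)"
  using U2_eq[of SA "{T}" \<sigma>1 "return_pmf T" C] assms by simp

lemma supp_best:
  assumes "finite X" "set_pmf \<sigma> \<subseteq> X" "\<forall>x\<in>X. g x \<le> (\<Sum>y\<in>X. pmf \<sigma> y * g y)" "x \<in> set_pmf \<sigma>"
  shows "g x = (\<Sum>y\<in>X. pmf \<sigma> y * g y)"
proof -
  define m where "m = (\<Sum>y\<in>X. pmf \<sigma> y * g y)"
  have s1: "(\<Sum>y\<in>X. pmf \<sigma> y) = 1" using assms by (simp add: sum_pmf_eq_1)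
  have "(\<Sum>y\<in>X. pmf \<sigma> y * (m - g y)) = m * (\<Sum>y\<in>X. pmf \<sigma> y) - m"
    unfolding m_def by (simp add: right_diff_distrib sum_subtractf sum_distrib_right mult_ac)
  also have "\<dots> = 0" using s1 by simp
  finally have z: "(\<Sum>y\<in>X. pmf \<sigma> y * (m - g y)) = 0" .
  have nn: "\<forall>y\<in>X. 0 \<le> pmf \<sigma> y * (m - g y)" using assms(3) unfolding m_def by auto
  have "x \<in> X" using assms by auto
  then have "pmf \<sigma> x * (m - g x) = 0" using z nn assms(1) by (simp add: sum_nonneg_eq_0_iff)
  moreover have "0 < pmf \<sigma> x" using assms(4) by (simp add: pmf_positive)
  ultimately show ?thesis unfolding m_def by simp
qed

lemma nonneg_sum_zero_terms:
  fixes f :: "'a \<Rightarrow> real"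
  assumes "finite X" "\<forall>x\<in>X. 0 \<le> f x" "(\<Sum>x\<in>X. pmf \<sigma> x * f x) \<le> 0" "x \<in> set_pmf \<sigma>" "x \<in> X"
  shows "f x = 0"
proof -
  have nn: "\<forall>y\<in>X. 0 \<le> pmf \<sigma> y * f y" using assms(2) by auto
  have "0 \<le> (\<Sum>x\<in>X. pmf \<sigma> x * f x)" using nn by (intro sum_nonneg) auto
  then have "(\<Sum>x\<in>X. pmf \<sigma> x * f x) = 0" using assms(3) by linarith
  then have "pmf \<sigma> x * f x = 0" using nn assms(1,5) by (simp add: sum_nonneg_eq_0_iff)
  then show ?thesis using assms(4) by (auto simp: set_pmf_eq)
qed



lemma card_Int_sum: "finite T \<Longrightarrow> real (card (X \<inter> T)) = (\<Sum>e\<in>T. if e \<in> X then 1 else 0)"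
  by (simp add: sum.If_cases Int_commute)

lemma avg_ge:
  fixes g :: "'a \<Rightarrow> real"
  assumes "finite X" "set_pmf \<sigma> \<subseteq> X" "\<And>x. x \<in> X \<Longrightarrow> a \<le> g x"
  shows "a \<le> (\<Sum>x\<in>X. pmf \<sigma> x * g x)"
proof -
  have "a = (\<Sum>x\<in>X. pmf \<sigma> x * a)" using sum_pmf_eq_1[OF assms(1,2)] by (simp add: sum_distrib_right[symmetric])
  also have "\<dots> \<le> (\<Sum>x\<in>X. pmf \<sigma> x * g x)" using assms(3) by (intro sum_mono mult_left_mono) auto
  finally show ?thesis .
qed

lemma avg_le:
  fixes g :: "'a \<Rightarrow> real"
  assumes "finite X" "set_pmf \<sigma> \<subseteq> X" "\<And>x. x \<in> X \<Longrightarrow> g x \<le> a"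
  shows "(\<Sum>x\<in>X. pmf \<sigma> x * g x) \<le> a"
proof -
  have "(\<Sum>x\<in>X. pmf \<sigma> x * g x) \<le> (\<Sum>x\<in>X. pmf \<sigma> x * a)" using assms(3) by (intro sum_mono mult_left_mono) auto
  also have "\<dots> = a" using sum_pmf_eq_1[OF assms(1,2)] by (simp add: sum_distrib_right[symmetric])
  finally show ?thesis .
qed

lemma F_diff: "finite T \<Longrightarrow> real (card T) - real (F C S T) = real (card (T - CS C S))"
proof -
  assume fT: "finite T"
  have "T = (CS C S \<inter> T) \<union> (T - CS C S)" by auto
  then have "card T = card (CS C S \<inter> T) + card (T - CS C S)"
    using fT by (metis card_Un_disjoint finite_Diff finite_Int Diff_disjoint Int_Diff_disjoint inf_commute)
  then show ?thesis unfolding F_def by simp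
qed

locale game =
  fixes V :: "'v set" and E :: "'e set" and C :: "'v \<Rightarrow> 'e set" and b1 b2 :: nat
  assumes fV: "finite V" and V0: "V \<noteq> {}" and fE: "finite E" and E0: "E \<noteq> {}"
    and CE: "\<forall>i\<in>V. C i \<subseteq> E"
    and cov: "\<forall>e\<in>E. \<exists>i\<in>V. e \<in> C i"
    and b1p: "0 < b1" and b2p: "0 < b2"
    and bn: "b1 < n_star V E C" and bm: "b2 < m_star V E C"
begin

lemma finA1: "finite (A1 V b1)"
  unfolding A1_def by (rule finite_subset[of _ "Pow V"]) (auto simp: fV)

lemma finA2: "finite (A2 E b2)"
  unfolding A2_def by (rule finite_subset[of _ "Pow E"]) (auto simp: fE)

lemma finA1bar: "finite (A1bar V b1)"
  unfolding A1bar_def by (rule finite_subset[of _ "Pow V"]) (auto simp: fV)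

lemma finA2bar: "finite (A2bar E b2)"
  unfolding A2bar_def by (rule finite_subset[of _ "Pow E"]) (auto simp: fE)

lemma CS_sub: "S \<subseteq> V \<Longrightarrow> CS C S \<subseteq> E"
  unfolding CS_def using CE by auto

lemma n_star_le: "set_cover V E C S \<Longrightarrow> n_star V E C \<le> card S"
proof -
  assume a: "set_cover V E C S"
  have "{card S |S. set_cover V E C S} \<subseteq> {..card V}"
    using fV by (auto simp: set_cover_def intro: card_mono)
  then have "finite {card S |S. set_cover V E C S}" by (rule finite_subset) auto
  then show ?thesis unfolding n_star_def using a by (intro Min_le) auto
qed

lemma V_cover: "set_cover V E C V"
  unfolding set_cover_def CS_def using CE cov by auto

lemma b1_le_V: "b1 \<le> card V"
  using n_star_le[OF V_cover] bn by simp

lemma packing_exists: "\<exists>P. set_packing V E C P \<and> card P = m_star V E C"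
proof -
  have "{card T |T. set_packing V E C T} \<subseteq> {..card E}"
    using fE by (auto simp: set_packing_def intro: card_mono)
  then have fin: "finite {card T |T. set_packing V E C T}" by (rule finite_subset) auto
  have "set_packing V E C {}" unfolding set_packing_def by auto
  then have "{card T |T. set_packing V E C T} \<noteq> {}" by auto
  from Max_in[OF fin this] show ?thesis unfolding m_star_def by auto
qed

lemma b2_le_E: "b2 \<le> card E"
proof -
  obtain P where "set_packing V E C P" "card P = m_star V E C" using packing_exists by blast
  then have "m_star V E C \<le> card E" using card_mono[OF fE] unfolding set_packing_def by metis
  then show ?thesis using bm by simp
qed

lemma F_mono: "S \<subseteq> S' \<Longrightarrow> finite T \<Longrightarrow> F C S T \<le> F C S' T"
  unfolding F_def CS_def by (intro card_mono) auto

lemma claimB: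
  assumes ne: "nash V E C b1 b2 \<sigma>1 \<sigma>2" and S: "S \<in> set_pmf \<sigma>1"
  shows "card S = b1"
proof (rule ccontr)
  assume nb: "card S \<noteq> b1"
  have s1: "set_pmf \<sigma>1 \<subseteq> A1 V b1" and s2: "set_pmf \<sigma>2 \<subseteq> A2 E b2"
    and br1: "\<forall>\<tau>1. set_pmf \<tau>1 \<subseteq> A1 V b1 \<longrightarrow> U1 C \<tau>1 \<sigma>2 \<le> U1 C \<sigma>1 \<sigma>2"
    and br2: "\<forall>\<tau>2. set_pmf \<tau>2 \<subseteq> A2 E b2 \<longrightarrow> U2 C \<sigma>1 \<tau>2 \<le> U2 C \<sigma>1 \<sigma>2"
    using ne unfolding nash_def by auto
  define u1 where "u1 S = U1 C (return_pmf S) \<sigma>2" for S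
  have U1e: "U1 C \<sigma>1 \<sigma>2 = (\<Sum>S\<in>A1 V b1. pmf \<sigma>1 S * u1 S)"
    unfolding u1_def by (rule U1_avg1[OF finA1 finA2 s1 s2])
  have u1f: "u1 S = (\<Sum>T\<in>A2 E b2. pmf \<sigma>2 T * real (F C S T))" for S
    unfolding u1_def by (rule U1_ret1[OF finA2 s2])
  have u1le: "\<forall>S\<in>A1 V b1. u1 S \<le> U1 C \<sigma>1 \<sigma>2" unfolding u1_def using br1 by auto
  have u1S: "u1 S = U1 C \<sigma>1 \<sigma>2" unfolding U1e
    by (rule supp_best[OF finA1 s1 _ S]) (use u1le U1e in auto)
  have SA: "S \<in> A1 V b1" using S s1 by auto
  then have SV: "S \<subseteq> V" and Sc: "card S < b1" using nb unfolding A1_def by auto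
  have fS: "finite S" using SV fV by (rule finite_subset)
  have TS: "T \<subseteq> CS C S" if T: "T \<in> set_pmf \<sigma>2" for T
  proof
    fix e assume eT: "e \<in> T"
    have TA: "T \<in> A2 E b2" using T s2 by auto
    then have TE: "T \<subseteq> E" unfolding A2_def by auto
    have fT: "finite T" using TE fE by (rule finite_subset)
    obtain i where i: "i \<in> V" "e \<in> C i" using cov TE eT by auto
    have S'A: "insert i S \<in> A1 V b1" unfolding A1_def using SV i Sc fS by (auto simp: card_insert_if)
    have "u1 (insert i S) \<le> u1 S" using u1le S'A u1S by auto
    then have "(\<Sum>T\<in>A2 E b2. pmf \<sigma>2 T * (real (F C (insert i S) T) - real (F C S T))) \<le> 0"
      unfolding u1f by (simp add: right_diff_distrib sum_subtractf)
    moreover have "\<forall>T\<in>A2 E b2. 0 \<le> real (F C (insert i S) T) - real (F C S T)"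
      using F_mono[of S "insert i S"] fE by (auto simp: A2_def intro: finite_subset)
    ultimately have "real (F C (insert i S) T) - real (F C S T) = 0"
      by (intro nonneg_sum_zero_terms[OF finA2 _ _ T TA])
    then have "card (CS C (insert i S) \<inter> T) = card (CS C S \<inter> T)" unfolding F_def by simp
    moreover have "CS C S \<inter> T \<subseteq> CS C (insert i S) \<inter> T" unfolding CS_def by auto
    ultimately have "CS C S \<inter> T = CS C (insert i S) \<inter> T" using fT by (intro card_subset_eq) auto
    moreover have "e \<in> CS C (insert i S) \<inter> T" unfolding CS_def using i eT by auto
    ultimately show "e \<in> CS C S" by auto
  qed
  have "u1 S = (\<Sum>T\<in>A2 E b2. pmf \<sigma>2 T * real (card T))" unfolding u1f
  proof (rule sum.cong[OF refl])
    fix T assume "T \<in> A2 E b2"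
    show "pmf \<sigma>2 T * real (F C S T) = pmf \<sigma>2 T * real (card T)"
    proof (cases "T \<in> set_pmf \<sigma>2")
      case True
      then have "CS C S \<inter> T = T" using TS by auto
      then show ?thesis unfolding F_def by simp
    next
      case False then show ?thesis by (simp add: set_pmf_eq)
    qed
  qed
  then have U20: "U2 C \<sigma>1 \<sigma>2 = 0" using U2_eq[OF finA1 finA2 s1 s2] u1S by simp
  have sum1: "(\<Sum>S\<in>A1 V b1. pmf \<sigma>1 S) = 1" using finA1 s1 by (rule sum_pmf_eq_1)
  have eS: "e \<in> CS C S" if eE: "e \<in> E" for e
  proof -
    have eA: "{e} \<in> A2 E b2" unfolding A2_def using eE b2p by auto
    have "U2 C \<sigma>1 (return_pmf {e}) \<le> 0" using br2 eA U20 by auto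
    moreover have "U2 C \<sigma>1 (return_pmf {e}) = 1 - (\<Sum>S\<in>A1 V b1. pmf \<sigma>1 S * real (F C S {e}))"
      unfolding U2_ret2[OF finA1 s1] U1_ret2[OF finA1 s1] by simp
    ultimately have "(\<Sum>S\<in>A1 V b1. pmf \<sigma>1 S * (1 - real (F C S {e}))) \<le> 0"
      using sum1 by (simp add: right_diff_distrib sum_subtractf)
    moreover have "\<forall>S\<in>A1 V b1. 0 \<le> 1 - real (F C S {e})"
      unfolding F_def by (auto simp: Int_insert_right)
    ultimately have "1 - real (F C S {e}) = 0" by (intro nonneg_sum_zero_terms[OF finA1 _ _ S SA])
    then show ?thesis unfolding F_def by (auto simp: Int_insert_right split: if_splits)
  qed
  have "set_cover V E C S" unfolding set_cover_def using SV CS_sub[OF SV] eS by auto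
  then have "n_star V E C \<le> card S" by (rule n_star_le)
  then show False using Sc bn by simp
qed


lemma claimA:
  assumes ne: "nash V E C b1 b2 \<sigma>1 \<sigma>2" and T0: "T0 \<in> set_pmf \<sigma>2"
  shows "card T0 = b2"
proof (rule ccontr)
  assume nb: "card T0 \<noteq> b2"
  have s1: "set_pmf \<sigma>1 \<subseteq> A1 V b1" and s2: "set_pmf \<sigma>2 \<subseteq> A2 E b2"
    and br1: "\<forall>\<tau>1. set_pmf \<tau>1 \<subseteq> A1 V b1 \<longrightarrow> U1 C \<tau>1 \<sigma>2 \<le> U1 C \<sigma>1 \<sigma>2"
    and br2: "\<forall>\<tau>2. set_pmf \<tau>2 \<subseteq> A2 E b2 \<longrightarrow> U2 C \<sigma>1 \<tau>2 \<le> U2 C \<sigma>1 \<sigma>2"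
    using ne unfolding nash_def by auto
  have T0A: "T0 \<in> A2 E b2" using T0 s2 by auto
  then have T0E: "T0 \<subseteq> E" and T0c: "card T0 < b2" using nb unfolding A2_def by auto
  have fT0: "finite T0" using T0E fE by (rule finite_subset)
  have sum1: "(\<Sum>S\<in>A1 V b1. pmf \<sigma>1 S) = 1" using finA1 s1 by (rule sum_pmf_eq_1)
  have sum2: "(\<Sum>T\<in>A2 E b2. pmf \<sigma>2 T) = 1" using finA2 s2 by (rule sum_pmf_eq_1)
  define p where "p e = (\<Sum>S\<in>A1 V b1. pmf \<sigma>1 S * (if e \<in> CS C S then 1 else 0))" for e
  define u2 where "u2 T = U2 C \<sigma>1 (return_pmf T)" for T
  have p1: "p e \<le> 1" for e
  proof -
    have "p e \<le> (\<Sum>S\<in>A1 V b1. pmf \<sigma>1 S)" unfolding p_def by (intro sum_mono) auto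
    then show ?thesis using sum1 by simp
  qed
  have u2f: "u2 T = (\<Sum>e\<in>T. 1 - p e)" if TE: "T \<subseteq> E" for T
  proof -
    have fT: "finite T" using TE fE by (rule finite_subset)
    have "u2 T = real (card T) - (\<Sum>S\<in>A1 V b1. pmf \<sigma>1 S * real (F C S T))"
      unfolding u2_def U2_ret2[OF finA1 s1] U1_ret2[OF finA1 s1] ..
    also have "(\<Sum>S\<in>A1 V b1. pmf \<sigma>1 S * real (F C S T)) = (\<Sum>S\<in>A1 V b1. \<Sum>e\<in>T. pmf \<sigma>1 S * (if e \<in> CS C S then 1 else 0))"
      unfolding F_def card_Int_sum[OF fT] by (simp add: sum_distrib_left)
    also have "\<dots> = (\<Sum>e\<in>T. p e)" unfolding p_def by (rule sum.swap)
    finally show ?thesis by (simp add: sum_subtractf)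
  qed
  have U2e: "U2 C \<sigma>1 \<sigma>2 = (\<Sum>T\<in>A2 E b2. pmf \<sigma>2 T * u2 T)"
    unfolding u2_def by (rule U2_avg2[OF finA1 finA2 s1 s2])
  have u2le: "\<forall>T\<in>A2 E b2. u2 T \<le> U2 C \<sigma>1 \<sigma>2" unfolding u2_def using br2 by auto
  have u2best: "u2 T' \<le> u2 T" if "T \<in> set_pmf \<sigma>2" "T' \<in> A2 E b2" for T T'
  proof -
    have "u2 T = U2 C \<sigma>1 \<sigma>2" unfolding U2e
      by (rule supp_best[OF finA2 s2 _ that(1)]) (use u2le U2e in auto)
    then show ?thesis using u2le that by auto
  qed
  have pe1: "p e = 1" if "e \<in> E" "e \<notin> T0" for e
  proof -
    have "insert e T0 \<in> A2 E b2" unfolding A2_def using that T0E T0c fT0 by auto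
    then have "u2 (insert e T0) \<le> u2 T0" using u2best T0 by auto
    moreover have "u2 (insert e T0) = (1 - p e) + u2 T0"
      using that T0E fT0 by (simp add: u2f)
    ultimately show ?thesis using p1[of e] by simp
  qed
  obtain Ss where Ss: "Ss \<in> set_pmf \<sigma>1" using set_pmf_not_empty by fast
  have SsA: "Ss \<in> A1 V b1" using Ss s1 by auto
  then have SsV: "Ss \<subseteq> V" unfolding A1_def by auto
  have cSs: "card Ss = b1" by (rule claimB[OF ne Ss])
  have fSs: "finite Ss" using SsV fV by (rule finite_subset)
  define R where "R = E - CS C Ss"
  have fR: "finite R" unfolding R_def using fE by auto
  have pr: "p r < 1" if "r \<in> R" for r
  proof -
    have "1 - p r = (\<Sum>S\<in>A1 V b1. pmf \<sigma>1 S * (1 - (if r \<in> CS C S then 1 else 0)))"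
      unfolding p_def using sum1 by (simp add: right_diff_distrib sum_subtractf)
    also have "\<dots> \<ge> pmf \<sigma>1 Ss * (1 - (if r \<in> CS C Ss then 1 else 0))"
      by (rule member_le_sum[OF SsA]) (auto intro: finA1)
    finally have "pmf \<sigma>1 Ss \<le> 1 - p r" using that unfolding R_def by simp
    moreover have "0 < pmf \<sigma>1 Ss" using Ss by (simp add: pmf_positive)
    ultimately show ?thesis by simp
  qed
  have rT: "r \<in> T" if r: "r \<in> R" and T: "T \<in> set_pmf \<sigma>2" for r T
  proof (rule ccontr)
    assume rn: "r \<notin> T"
    have TA: "T \<in> A2 E b2" using T s2 by auto
    then have TE: "T \<subseteq> E" and Tc: "card T \<le> b2" unfolding A2_def by auto
    have fT: "finite T" using TE fE by (rule finite_subset)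
    have rE: "r \<in> E" using r unfolding R_def by auto
    show False
    proof (cases "card T < b2")
      case True
      then have "insert r T \<in> A2 E b2" unfolding A2_def using TE rE fT by (auto simp: card_insert_if)
      then have "u2 (insert r T) \<le> u2 T" using u2best T by auto
      moreover have "u2 (insert r T) = (1 - p r) + u2 T" using rE TE fT rn by (simp add: u2f)
      ultimately show False using pr[OF r] by simp
    next
      case False
      then have cT: "card T = b2" using Tc by simp
      have "\<not> T \<subseteq> T0"
      proof
        assume "T \<subseteq> T0"
        then have "card T \<le> card T0" using fT0 by (rule card_mono[rotated])
        then show False using cT T0c by simp
      qed
      then obtain t where t: "t \<in> T" "t \<notin> T0" by auto
      have tE: "t \<in> E" using t TE by auto
      have pt: "p t = 1" using pe1 tE t by simp
      have "card (T - {t}) = b2 - 1" using cT t fT by simp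
      then have "insert r (T - {t}) \<in> A2 E b2" unfolding A2_def using TE rE fT rn b2p
        by (auto simp: card_insert_if)
      then have "u2 (insert r (T - {t})) \<le> u2 T" using u2best T by auto
      moreover have "u2 (insert r (T - {t})) = (1 - p r) + u2 (T - {t})"
      proof -
        have "insert r (T - {t}) \<subseteq> E" "T - {t} \<subseteq> E" using rE TE by auto
        then show ?thesis unfolding u2f[OF \<open>insert r (T - {t}) \<subseteq> E\<close>] u2f[OF \<open>T - {t} \<subseteq> E\<close>]
          using fT rn by simp
      qed
      moreover have "u2 T = (1 - p t) + u2 (T - {t})"
      proof -
        have "T - {t} \<subseteq> E" using TE by auto
        then show ?thesis unfolding u2f[OF TE] u2f[OF \<open>T - {t} \<subseteq> E\<close>]
          using fT t by (simp add: sum.remove)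
      qed
      ultimately show False using pr[OF r] pt by simp
    qed
  qed
  define q where "q e = (\<Sum>T\<in>A2 E b2. pmf \<sigma>2 T * (if e \<in> T then 1 else 0))" for e
  define Q where "Q X = (\<Sum>e\<in>X. q e)" for X
  have q0: "0 \<le> q e" for e unfolding q_def by (intro sum_nonneg) auto
  have qr: "q r = 1" if r: "r \<in> R" for r
  proof -
    have "q r = (\<Sum>T\<in>A2 E b2. pmf \<sigma>2 T)" unfolding q_def
    proof (rule sum.cong[OF refl])
      fix T assume "T \<in> A2 E b2"
      show "pmf \<sigma>2 T * (if r \<in> T then 1 else 0) = pmf \<sigma>2 T"
        using rT[OF r, of T] by (cases "T \<in> set_pmf \<sigma>2") (auto simp: set_pmf_eq)
    qed
    then show ?thesis using sum2 by simp
  qed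
  define u1 where "u1 S = U1 C (return_pmf S) \<sigma>2" for S
  have u1f: "u1 S = Q (CS C S)" if SV: "S \<subseteq> V" for S
  proof -
    have fCS: "finite (CS C S)" using CS_sub[OF SV] fE by (rule finite_subset)
    have "u1 S = (\<Sum>T\<in>A2 E b2. pmf \<sigma>2 T * real (F C S T))"
      unfolding u1_def by (rule U1_ret1[OF finA2 s2])
    also have "\<dots> = (\<Sum>T\<in>A2 E b2. \<Sum>e\<in>CS C S. pmf \<sigma>2 T * (if e \<in> T then 1 else 0))"
      unfolding F_def Int_commute[of "CS C S"] card_Int_sum[OF fCS] by (simp add: sum_distrib_left)
    also have "\<dots> = Q (CS C S)" unfolding Q_def q_def by (rule sum.swap)
    finally show ?thesis .
  qed
  have U1e: "U1 C \<sigma>1 \<sigma>2 = (\<Sum>S\<in>A1 V b1. pmf \<sigma>1 S * u1 S)"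
    unfolding u1_def by (rule U1_avg1[OF finA1 finA2 s1 s2])
  have u1le: "\<forall>S\<in>A1 V b1. u1 S \<le> U1 C \<sigma>1 \<sigma>2" unfolding u1_def using br1 by auto
  have u1Ss: "u1 Ss = U1 C \<sigma>1 \<sigma>2" unfolding U1e
    by (rule supp_best[OF finA1 s1 _ Ss]) (use u1le U1e in auto)
  have R0: "R \<noteq> {}"
  proof
    assume "R = {}"
    then have "set_cover V E C Ss" unfolding set_cover_def R_def using SsV CS_sub[OF SsV] by auto
    then have "n_star V E C \<le> card Ss" by (rule n_star_le)
    then show False using cSs bn by simp
  qed
  then obtain r where r: "r \<in> R" by auto
  then have rE: "r \<in> E" and rCS: "r \<notin> CS C Ss" unfolding R_def by auto
  obtain i where i: "i \<in> V" "r \<in> C i" using cov rE by auto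
  define X where "X j = CS C Ss - CS C (Ss - {j})" for j
  have fCSs: "finite (CS C Ss)" using CS_sub[OF SsV] fE by (rule finite_subset)
  have QX: "1 \<le> Q (X j)" if j: "j \<in> Ss" for j
  proof -
    define S' where "S' = insert i (Ss - {j})"
    have S'V: "S' \<subseteq> V" unfolding S'_def using SsV i by auto
    have "card S' \<le> b1" unfolding S'_def using cSs j fSs b1p
      by (simp add: card_insert_if)
    then have "S' \<in> A1 V b1" unfolding A1_def using S'V by auto
    then have le: "u1 S' \<le> u1 Ss" using u1le u1Ss by auto
    have sub1: "CS C (Ss - {j}) \<subseteq> CS C Ss" unfolding CS_def by auto
    have fCS': "finite (CS C S')" using CS_sub[OF S'V] fE by (rule finite_subset)
    have "insert r (CS C (Ss - {j})) \<subseteq> CS C S'" unfolding S'_def CS_def using i by auto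
    then have "Q (insert r (CS C (Ss - {j}))) \<le> Q (CS C S')"
      unfolding Q_def using fCS' q0 by (intro sum_mono2) auto
    moreover have "Q (insert r (CS C (Ss - {j}))) = q r + Q (CS C (Ss - {j}))"
      unfolding Q_def using rCS sub1 fCSs by (subst sum.insert) (auto intro: finite_subset)
    moreover have "Q (CS C Ss) = Q (X j) + Q (CS C (Ss - {j}))"
      unfolding Q_def X_def using sum.subset_diff[OF sub1 fCSs] .
    ultimately show ?thesis using le u1f[OF S'V] u1f[OF SsV] qr[OF r] by simp
  qed
  have disj: "X j \<inter> X k = {}" if "j \<in> Ss" "k \<in> Ss" "j \<noteq> k" for j k
  proof (rule ccontr)
    assume "X j \<inter> X k \<noteq> {}"
    then obtain e where e: "e \<in> X j" "e \<in> X k" by auto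
    then obtain l where l: "l \<in> Ss" "e \<in> C l" unfolding X_def CS_def by auto
    have "l = j" using e(1) l unfolding X_def CS_def by auto
    moreover have "l = k" using e(2) l unfolding X_def CS_def by auto
    ultimately show False using that by simp
  qed
  have "real b1 = (\<Sum>j\<in>Ss. 1)" using cSs by simp
  also have "\<dots> \<le> (\<Sum>j\<in>Ss. Q (X j))" using QX by (intro sum_mono) auto
  also have "\<dots> = Q (\<Union>j\<in>Ss. X j)" unfolding Q_def
    using fSs fCSs disj by (subst sum.UNION_disjoint) (auto simp: X_def intro: finite_subset)
  also have "\<dots> \<le> Q (CS C Ss)" unfolding Q_def using fCSs q0 by (intro sum_mono2) (auto simp: X_def)
  finally have QCS: "real b1 \<le> Q (CS C Ss)" .
  have QR: "Q R = real (card R)" unfolding Q_def using qr by simp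
  have QE: "Q E = Q R + Q (CS C Ss)"
    unfolding Q_def R_def using sum.subset_diff[OF CS_sub[OF SsV] fE] .
  have QEM: "Q E = (\<Sum>T\<in>A2 E b2. pmf \<sigma>2 T * real (card T))"
  proof -
    have "Q E = (\<Sum>T\<in>A2 E b2. \<Sum>e\<in>E. pmf \<sigma>2 T * (if e \<in> T then 1 else 0))"
      unfolding Q_def q_def by (rule sum.swap)
    also have "\<dots> = (\<Sum>T\<in>A2 E b2. pmf \<sigma>2 T * real (card T))"
    proof (rule sum.cong[OF refl])
      fix T assume "T \<in> A2 E b2"
      then have "T \<inter> E = T" unfolding A2_def by auto
      then have "real (card T) = (\<Sum>e\<in>E. if e \<in> T then 1 else 0)" using card_Int_sum[OF fE, of T] by simp
      then show "(\<Sum>e\<in>E. pmf \<sigma>2 T * (if e \<in> T then 1 else 0)) = pmf \<sigma>2 T * real (card T)"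
        by (simp add: sum_distrib_left)
    qed
    finally show ?thesis .
  qed
  have "0 < pmf \<sigma>2 T0 * (real b2 - real (card T0))" using T0 T0c by (simp add: pmf_positive)
  also have "\<dots> \<le> (\<Sum>T\<in>A2 E b2. pmf \<sigma>2 T * (real b2 - real (card T)))"
    using finA2 by (intro member_le_sum[OF T0A]) (auto simp: A2_def)
  also have "\<dots> = real b2 - (\<Sum>T\<in>A2 E b2. pmf \<sigma>2 T * real (card T))"
    using sum2 by (simp add: right_diff_distrib sum_subtractf sum_distrib_right[symmetric])
  finally have QEb: "Q E < real b2" using QEM by simp
  obtain P where P: "set_packing V E C P" "card P = m_star V E C" using packing_exists by blast
  have PE: "P \<subseteq> E" and Pc: "\<forall>i\<in>V. card (C i \<inter> P) \<le> 1" using P unfolding set_packing_def by auto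
  have "P = (\<Union>j\<in>Ss. C j \<inter> P) \<union> (P \<inter> R)" using PE unfolding R_def CS_def by auto
  then have "card P \<le> card (\<Union>j\<in>Ss. C j \<inter> P) + card (P \<inter> R)" by (metis card_Un_le)
  also have "card (\<Union>j\<in>Ss. C j \<inter> P) \<le> (\<Sum>j\<in>Ss. card (C j \<inter> P))" using fSs by (rule card_UN_le)
  also have "\<dots> \<le> (\<Sum>j\<in>Ss. 1)" using Pc SsV by (intro sum_mono) auto
  also have "card (P \<inter> R) \<le> card R" using fR by (intro card_mono) auto
  finally have "card P \<le> card Ss + card R" using cSs by simp
  then have "real (m_star V E C) \<le> real b1 + real (card R)" using P cSs by simp
  also have "\<dots> \<le> Q E" using QCS QR QE by simp
  finally show False using QEb bm by simp
qed


lemma ext1: "S \<subseteq> V \<Longrightarrow> card S \<le> b1 \<Longrightarrow> \<exists>S'. S \<subseteq> S' \<and> S' \<in> A1bar V b1"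
proof -
  assume SV: "S \<subseteq> V" and Sc: "card S \<le> b1"
  have fS: "finite S" using SV fV by (rule finite_subset)
  have "b1 - card S \<le> card (V - S)" using b1_le_V SV fS Sc by (simp add: card_Diff_subset)
  then obtain D where D: "D \<subseteq> V - S" "card D = b1 - card S" "finite D" by (rule obtain_subset_with_card_n)
  have "card (S \<union> D) = card S + card D" using D fS by (intro card_Un_disjoint) auto
  then have "card (S \<union> D) = b1" using D Sc by simp
  then show ?thesis using SV D unfolding A1bar_def by (intro exI[of _ "S \<union> D"]) auto
qed

lemma ext2: "T \<subseteq> E \<Longrightarrow> card T \<le> b2 \<Longrightarrow> \<exists>T'. T \<subseteq> T' \<and> T' \<in> A2bar E b2"
proof -
  assume TE: "T \<subseteq> E" and Tc: "card T \<le> b2"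
  have fT: "finite T" using TE fE by (rule finite_subset)
  have "b2 - card T \<le> card (E - T)" using b2_le_E TE fT Tc by (simp add: card_Diff_subset)
  then obtain D where D: "D \<subseteq> E - T" "card D = b2 - card T" "finite D" by (rule obtain_subset_with_card_n)
  have "card (T \<union> D) = card T + card D" using D fT by (intro card_Un_disjoint) auto
  then have "card (T \<union> D) = b2" using D Tc by simp
  then show ?thesis using TE D unfolding A2bar_def by (intro exI[of _ "T \<union> D"]) auto
qed

lemma A1bar_ne: "A1bar V b1 \<noteq> {}" using ext1[of "{}"] by auto
lemma A2bar_ne: "A2bar E b2 \<noteq> {}" using ext2[of "{}"] by auto
lemma A1bar_sub: "A1bar V b1 \<subseteq> A1 V b1" unfolding A1bar_def A1_def by auto
lemma A2bar_sub: "A2bar E b2 \<subseteq> A2 E b2" unfolding A2bar_def A2_def by auto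

lemma cardsum2: "set_pmf \<sigma>2 \<subseteq> A2bar E b2 \<Longrightarrow> (\<Sum>T\<in>A2bar E b2. pmf \<sigma>2 T * real (card T)) = real b2"
proof -
  assume s: "set_pmf \<sigma>2 \<subseteq> A2bar E b2"
  have "(\<Sum>T\<in>A2bar E b2. pmf \<sigma>2 T * real (card T)) = (\<Sum>T\<in>A2bar E b2. pmf \<sigma>2 T * real b2)"
    unfolding A2bar_def by (rule sum.cong) auto
  also have "\<dots> = real b2" using sum_pmf_eq_1[OF finA2bar s] by (simp add: sum_distrib_right[symmetric])
  finally show ?thesis .
qed

lemma U2_bar: "set_pmf \<sigma>1 \<subseteq> A1bar V b1 \<Longrightarrow> set_pmf \<sigma>2 \<subseteq> A2bar E b2 \<Longrightarrow> U2 C \<sigma>1 \<sigma>2 = real b2 - U1 C \<sigma>1 \<sigma>2"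
  using U2_eq[OF finA1bar finA2bar] cardsum2 by simp

lemma nash_imp_opt:
  assumes ne: "nash V E C b1 b2 \<sigma>1 \<sigma>2"
  shows "maxmin_opt V E C b1 b2 \<sigma>1 \<and> minmax_opt V E C b1 b2 \<sigma>2"
proof -
  have s1: "set_pmf \<sigma>1 \<subseteq> A1 V b1" and s2: "set_pmf \<sigma>2 \<subseteq> A2 E b2"
    and br1: "\<forall>\<tau>1. set_pmf \<tau>1 \<subseteq> A1 V b1 \<longrightarrow> U1 C \<tau>1 \<sigma>2 \<le> U1 C \<sigma>1 \<sigma>2"
    and br2: "\<forall>\<tau>2. set_pmf \<tau>2 \<subseteq> A2 E b2 \<longrightarrow> U2 C \<sigma>1 \<tau>2 \<le> U2 C \<sigma>1 \<sigma>2"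
    using ne unfolding nash_def by auto
  have s1': "set_pmf \<sigma>1 \<subseteq> A1bar V b1" using s1 claimB[OF ne] unfolding A1_def A1bar_def by auto
  have s2': "set_pmf \<sigma>2 \<subseteq> A2bar E b2" using s2 claimA[OF ne] unfolding A2_def A2bar_def by auto
  have fi2: "finite ((\<lambda>T. U1 C \<tau> (return_pmf T)) ` A2bar E b2)" for \<tau> using finA2bar by simp
  have ne2: "((\<lambda>T. U1 C \<tau> (return_pmf T)) ` A2bar E b2) \<noteq> {}" for \<tau> using A2bar_ne by simp
  have fi1: "finite ((\<lambda>S. U1 C (return_pmf S) \<tau>) ` A1bar V b1)" for \<tau> using finA1bar by simp
  have ne1: "((\<lambda>S. U1 C (return_pmf S) \<tau>) ` A1bar V b1) \<noteq> {}" for \<tau> using A1bar_ne by simp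
  have U2s: "U2 C \<sigma>1 \<sigma>2 = real b2 - U1 C \<sigma>1 \<sigma>2" by (rule U2_bar[OF s1' s2'])
  have T1: "U1 C \<sigma>1 \<sigma>2 \<le> U1 C \<sigma>1 \<tau>2" if "set_pmf \<tau>2 \<subseteq> A2bar E b2" for \<tau>2
  proof -
    have "U2 C \<sigma>1 \<tau>2 \<le> U2 C \<sigma>1 \<sigma>2" using br2 that A2bar_sub by auto
    then show ?thesis using U2s U2_bar[OF s1' that] by simp
  qed
  have mm: "maxmin_opt V E C b1 b2 \<sigma>1"
    unfolding maxmin_opt_def
  proof (intro conjI allI impI s1')
    fix \<tau>1 assume t1: "set_pmf \<tau>1 \<subseteq> A1bar V b1"
    have "Min ((\<lambda>T. U1 C \<tau>1 (return_pmf T)) ` A2bar E b2) \<le> (\<Sum>T\<in>A2bar E b2. pmf \<sigma>2 T * U1 C \<tau>1 (return_pmf T))"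
      by (rule avg_ge[OF finA2bar s2']) (use fi2 in auto)
    also have "\<dots> = U1 C \<tau>1 \<sigma>2" by (rule U1_avg2[OF finA1bar finA2bar t1 s2', symmetric])
    also have "\<dots> \<le> U1 C \<sigma>1 \<sigma>2" using br1 t1 A1bar_sub by auto
    also have "\<dots> \<le> Min ((\<lambda>T. U1 C \<sigma>1 (return_pmf T)) ` A2bar E b2)"
      using T1 fi2 ne2 by (auto simp: Min_ge_iff A2bar_def)
    finally show "Min ((\<lambda>T. U1 C \<tau>1 (return_pmf T)) ` A2bar E b2) \<le> Min ((\<lambda>T. U1 C \<sigma>1 (return_pmf T)) ` A2bar E b2)" .
  qed
  have mM: "minmax_opt V E C b1 b2 \<sigma>2"
    unfolding minmax_opt_def
  proof (intro conjI allI impI s2')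
    fix \<tau>2 assume t2: "set_pmf \<tau>2 \<subseteq> A2bar E b2"
    have "Max ((\<lambda>S. U1 C (return_pmf S) \<sigma>2) ` A1bar V b1) \<le> U1 C \<sigma>1 \<sigma>2"
      using br1 A1bar_sub fi1 ne1 by (auto simp: Max_le_iff)
    also have "\<dots> \<le> U1 C \<sigma>1 \<tau>2" by (rule T1[OF t2])
    also have "\<dots> = (\<Sum>S\<in>A1bar V b1. pmf \<sigma>1 S * U1 C (return_pmf S) \<tau>2)"
      by (rule U1_avg1[OF finA1bar finA2bar s1' t2])
    also have "\<dots> \<le> Max ((\<lambda>S. U1 C (return_pmf S) \<tau>2) ` A1bar V b1)"
      by (rule avg_le[OF finA1bar s1']) (use fi1 in auto)
    finally show "Max ((\<lambda>S. U1 C (return_pmf S) \<sigma>2) ` A1bar V b1) \<le> Max ((\<lambda>S. U1 C (return_pmf S) \<tau>2) ` A1bar V b1)" .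
  qed
  show ?thesis using mm mM by simp
qed


lemma opt_imp_nash:
  assumes m1: "maxmin_opt V E C b1 b2 \<sigma>1" and m2: "minmax_opt V E C b1 b2 \<sigma>2"
  shows "nash V E C b1 b2 \<sigma>1 \<sigma>2"
proof -
  have s1': "set_pmf \<sigma>1 \<subseteq> A1bar V b1"
    and opt1: "\<forall>\<tau>1. set_pmf \<tau>1 \<subseteq> A1bar V b1 \<longrightarrow>
        Min ((\<lambda>T. U1 C \<tau>1 (return_pmf T)) ` A2bar E b2) \<le> Min ((\<lambda>T. U1 C \<sigma>1 (return_pmf T)) ` A2bar E b2)"
    using m1 unfolding maxmin_opt_def by auto
  have s2': "set_pmf \<sigma>2 \<subseteq> A2bar E b2"
    and opt2: "\<forall>\<tau>2. set_pmf \<tau>2 \<subseteq> A2bar E b2 \<longrightarrow>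
        Max ((\<lambda>S. U1 C (return_pmf S) \<sigma>2) ` A1bar V b1) \<le> Max ((\<lambda>S. U1 C (return_pmf S) \<tau>2) ` A1bar V b1)"
    using m2 unfolding minmax_opt_def by auto
  have fi2: "finite ((\<lambda>T. U1 C \<tau> (return_pmf T)) ` A2bar E b2)" for \<tau> using finA2bar by simp
  have ne2: "((\<lambda>T. U1 C \<tau> (return_pmf T)) ` A2bar E b2) \<noteq> {}" for \<tau> using A2bar_ne by simp
  have fi1: "finite ((\<lambda>S. U1 C (return_pmf S) \<tau>) ` A1bar V b1)" for \<tau> using finA1bar by simp
  have ne1: "((\<lambda>S. U1 C (return_pmf S) \<tau>) ` A1bar V b1) \<noteq> {}" for \<tau> using A1bar_ne by simp
  define v1 where "v1 = Min ((\<lambda>T. U1 C \<sigma>1 (return_pmf T)) ` A2bar E b2)"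
  define v2 where "v2 = Max ((\<lambda>S. U1 C (return_pmf S) \<sigma>2) ` A1bar V b1)"
  have v21: "v2 \<le> v1"
  proof (rule ccontr)
    assume "\<not> v2 \<le> v1"
    then have lt: "v1 < v2" by simp
    define c where "c = (v1 + v2) / 2"
    have c1: "v1 < c" and c2: "c < v2" using lt unfolding c_def by auto
    from ville_idx[OF finA1bar finA2bar A2bar_ne, of "\<lambda>S T. real (F C S T) - c"] show False
    proof
      assume "\<exists>y. (\<forall>j\<in>A2bar E b2. 0 \<le> y j) \<and> (\<Sum>j\<in>A2bar E b2. y j) = 1 \<and>
          (\<forall>i\<in>A1bar V b1. (\<Sum>j\<in>A2bar E b2. y j * (real (F C i j) - c)) \<le> 0)"
      then obtain y where y: "\<forall>j\<in>A2bar E b2. 0 \<le> y j" "(\<Sum>j\<in>A2bar E b2. y j) = 1"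
          "\<forall>i\<in>A1bar V b1. (\<Sum>j\<in>A2bar E b2. y j * (real (F C i j) - c)) \<le> 0" by blast
      obtain \<tau> where \<tau>: "set_pmf \<tau> \<subseteq> A2bar E b2" "\<forall>j\<in>A2bar E b2. pmf \<tau> j = y j"
        using pmf_from_weights[OF finA2bar y(1,2)] by blast
      have "U1 C (return_pmf S) \<tau> \<le> c" if S: "S \<in> A1bar V b1" for S
      proof -
        have "U1 C (return_pmf S) \<tau> = (\<Sum>T\<in>A2bar E b2. y T * real (F C S T))"
          using U1_ret1[OF finA2bar \<tau>(1)] \<tau>(2) by simp
        moreover have "(\<Sum>T\<in>A2bar E b2. y T * (real (F C S T) - c)) = (\<Sum>T\<in>A2bar E b2. y T * real (F C S T)) - c"
          using y(2) by (simp add: right_diff_distrib sum_subtractf sum_distrib_right[symmetric])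
        moreover have "(\<Sum>T\<in>A2bar E b2. y T * (real (F C S T) - c)) \<le> 0" using y(3) S by blast
        ultimately show ?thesis by linarith
      qed
      then have "Max ((\<lambda>S. U1 C (return_pmf S) \<tau>) ` A1bar V b1) \<le> c" using fi1 ne1 by (auto simp: Max_le_iff)
      moreover have "v2 \<le> Max ((\<lambda>S. U1 C (return_pmf S) \<tau>) ` A1bar V b1)" unfolding v2_def using opt2 \<tau>(1) by auto
      ultimately show False using c2 by simp
    next
      assume "\<exists>x. (\<forall>i\<in>A1bar V b1. 0 \<le> x i) \<and> (\<Sum>i\<in>A1bar V b1. x i) = 1 \<and>
          (\<forall>j\<in>A2bar E b2. 0 < (\<Sum>i\<in>A1bar V b1. x i * (real (F C i j) - c)))"
      then obtain x where x: "\<forall>i\<in>A1bar V b1. 0 \<le> x i" "(\<Sum>i\<in>A1bar V b1. x i) = 1"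
          "\<forall>j\<in>A2bar E b2. 0 < (\<Sum>i\<in>A1bar V b1. x i * (real (F C i j) - c))" by blast
      obtain \<tau> where \<tau>: "set_pmf \<tau> \<subseteq> A1bar V b1" "\<forall>j\<in>A1bar V b1. pmf \<tau> j = x j"
        using pmf_from_weights[OF finA1bar x(1,2)] by blast
      have "c < U1 C \<tau> (return_pmf T)" if T: "T \<in> A2bar E b2" for T
      proof -
        have "U1 C \<tau> (return_pmf T) = (\<Sum>S\<in>A1bar V b1. x S * real (F C S T))"
          using U1_ret2[OF finA1bar \<tau>(1)] \<tau>(2) by simp
        moreover have "(\<Sum>S\<in>A1bar V b1. x S * (real (F C S T) - c)) = (\<Sum>S\<in>A1bar V b1. x S * real (F C S T)) - c"
          using x(2) by (simp add: right_diff_distrib sum_subtractf sum_distrib_right[symmetric])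
        moreover have "0 < (\<Sum>S\<in>A1bar V b1. x S * (real (F C S T) - c))" using x(3) T by blast
        ultimately show ?thesis by linarith
      qed
      then have "c < Min ((\<lambda>T. U1 C \<tau> (return_pmf T)) ` A2bar E b2)" using fi2 ne2 by (auto simp: Min_gr_iff)
      moreover have "Min ((\<lambda>T. U1 C \<tau> (return_pmf T)) ` A2bar E b2) \<le> v1" unfolding v1_def using opt1 \<tau>(1) by auto
      ultimately show False using c1 by simp
    qed
  qed
  define U where "U = U1 C \<sigma>1 \<sigma>2"
  have Uv2: "U \<le> v2"
  proof -
    have "U = (\<Sum>S\<in>A1bar V b1. pmf \<sigma>1 S * U1 C (return_pmf S) \<sigma>2)"
      unfolding U_def by (rule U1_avg1[OF finA1bar finA2bar s1' s2'])
    also have "\<dots> \<le> v2" unfolding v2_def by (rule avg_le[OF finA1bar s1']) (use fi1 in auto)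
    finally show ?thesis .
  qed
  have v1U: "v1 \<le> U"
  proof -
    have "v1 \<le> (\<Sum>T\<in>A2bar E b2. pmf \<sigma>2 T * U1 C \<sigma>1 (return_pmf T))"
      unfolding v1_def by (rule avg_ge[OF finA2bar s2']) (use fi2 in auto)
    also have "\<dots> = U" unfolding U_def by (rule U1_avg2[OF finA1bar finA2bar s1' s2', symmetric])
    finally show ?thesis .
  qed
  have br1: "U1 C \<tau>1 \<sigma>2 \<le> U1 C \<sigma>1 \<sigma>2" if t1: "set_pmf \<tau>1 \<subseteq> A1 V b1" for \<tau>1
  proof -
    have "U1 C (return_pmf S) \<sigma>2 \<le> v2" if S: "S \<in> A1 V b1" for S
    proof -
      obtain S' where S': "S \<subseteq> S'" "S' \<in> A1bar V b1" using ext1 S unfolding A1_def by blast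
      have "U1 C (return_pmf S) \<sigma>2 = (\<Sum>T\<in>A2bar E b2. pmf \<sigma>2 T * real (F C S T))"
        by (rule U1_ret1[OF finA2bar s2'])
      also have "\<dots> \<le> (\<Sum>T\<in>A2bar E b2. pmf \<sigma>2 T * real (F C S' T))"
      proof (intro sum_mono mult_left_mono)
        fix T assume "T \<in> A2bar E b2"
        then have "finite T" unfolding A2bar_def using fE by (auto intro: finite_subset)
        then show "real (F C S T) \<le> real (F C S' T)" using F_mono[OF S'(1)] by simp
      qed simp
      also have "\<dots> = U1 C (return_pmf S') \<sigma>2" by (rule U1_ret1[OF finA2bar s2', symmetric])
      also have "\<dots> \<le> v2" unfolding v2_def using fi1 S'(2) by auto
      finally show ?thesis .
    qed
    then have "(\<Sum>S\<in>A1 V b1. pmf \<tau>1 S * U1 C (return_pmf S) \<sigma>2) \<le> v2"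
      by (intro avg_le[OF finA1 t1]) auto
    moreover have "U1 C \<tau>1 \<sigma>2 = (\<Sum>S\<in>A1 V b1. pmf \<tau>1 S * U1 C (return_pmf S) \<sigma>2)"
      by (rule U1_avg1[OF finA1 finA2bar t1 s2'])
    ultimately show ?thesis using v21 v1U unfolding U_def by simp
  qed
  have br2: "U2 C \<sigma>1 \<tau>2 \<le> U2 C \<sigma>1 \<sigma>2" if t2: "set_pmf \<tau>2 \<subseteq> A2 E b2" for \<tau>2
  proof -
    have u2f: "U2 C \<sigma>1 (return_pmf T) = (\<Sum>S\<in>A1bar V b1. pmf \<sigma>1 S * real (card (T - CS C S)))"
      if "finite T" for T
    proof -
      have "U2 C \<sigma>1 (return_pmf T) = (\<Sum>S\<in>A1bar V b1. pmf \<sigma>1 S * (real (card T) - real (F C S T)))"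
        using U2_sum[of "A1bar V b1" "{T}" \<sigma>1 "return_pmf T" C] finA1bar s1' by simp
      also have "\<dots> = (\<Sum>S\<in>A1bar V b1. pmf \<sigma>1 S * real (card (T - CS C S)))"
        by (intro sum.cong refl) (simp only: F_diff[OF that])
      finally show ?thesis .
    qed
    have "U2 C \<sigma>1 (return_pmf T) \<le> real b2 - v1" if T: "T \<in> A2 E b2" for T
    proof -
      obtain T' where T': "T \<subseteq> T'" "T' \<in> A2bar E b2" using ext2 T unfolding A2_def by blast
      have fT': "finite T'" using T' fE unfolding A2bar_def by (auto intro: finite_subset)
      have fT: "finite T" using T'(1) fT' by (rule finite_subset)
      have "U2 C \<sigma>1 (return_pmf T) \<le> U2 C \<sigma>1 (return_pmf T')"
        unfolding u2f[OF fT] u2f[OF fT']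
        using fT' T'(1) by (intro sum_mono mult_left_mono) (auto intro: card_mono)
      also have "\<dots> = real (card T') - U1 C \<sigma>1 (return_pmf T')"
        by (rule U2_ret2[OF finA1bar s1'])
      also have "\<dots> = real b2 - U1 C \<sigma>1 (return_pmf T')"
        using T'(2) unfolding A2bar_def by simp
      also have "\<dots> \<le> real b2 - v1" unfolding v1_def using fi2 T'(2) by auto
      finally show ?thesis .
    qed
    then have "(\<Sum>T\<in>A2 E b2. pmf \<tau>2 T * U2 C \<sigma>1 (return_pmf T)) \<le> real b2 - v1"
      by (intro avg_le[OF finA2 t2]) auto
    moreover have "U2 C \<sigma>1 \<tau>2 = (\<Sum>T\<in>A2 E b2. pmf \<tau>2 T * U2 C \<sigma>1 (return_pmf T))"
      by (rule U2_avg2[OF finA1bar finA2 s1' t2])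
    moreover have "U2 C \<sigma>1 \<sigma>2 = real b2 - U" unfolding U_def by (rule U2_bar[OF s1' s2'])
    ultimately show ?thesis using v21 Uv2 by simp
  qed
  show ?thesis unfolding nash_def using s1' s2' A1bar_sub A2bar_sub br1 br2 by blast
qed

lemma main:
  "(\<forall>\<sigma>1 \<sigma>2. nash V E C b1 b2 \<sigma>1 \<sigma>2 \<longrightarrow>
      (\<forall>S\<in>set_pmf \<sigma>1. card S = b1) \<and> (\<forall>T\<in>set_pmf \<sigma>2. card T = b2))
   \<and> (\<forall>\<sigma>1 \<sigma>2. nash V E C b1 b2 \<sigma>1 \<sigma>2 \<longleftrightarrow>
      maxmin_opt V E C b1 b2 \<sigma>1 \<and> minmax_opt V E C b1 b2 \<sigma>2)"
  using claimA claimB nash_imp_opt opt_imp_nash by blast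

end

theorem proposition2:
  fixes V :: "'v set" and E :: "'e set" and C :: "'v \<Rightarrow> 'e set" and b1 b2 :: nat
  assumes "finite V" "V \<noteq> {}" "finite E" "E \<noteq> {}"
    and "\<forall>i\<in>V. C i \<subseteq> E"
    and "\<forall>e\<in>E. \<exists>i\<in>V. e \<in> C i"
    and "0 < b1" "0 < b2"
    and "b1 < n_star V E C" "b2 < m_star V E C"
  shows "(\<forall>\<sigma>1 \<sigma>2. nash V E C b1 b2 \<sigma>1 \<sigma>2 \<longrightarrow>
            (\<forall>S\<in>set_pmf \<sigma>1. card S = b1) \<and> (\<forall>T\<in>set_pmf \<sigma>2. card T = b2))
       \<and> (\<forall>\<sigma>1 \<sigma>2. nash V E C b1 b2 \<sigma>1 \<sigma>2 \<longleftrightarrow>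
            maxmin_opt V E C b1 b2 \<sigma>1 \<and> minmax_opt V E C b1 b2 \<sigma>2)"
proof -
  interpret game V E C b1 b2 by (rule game.intro) (use assms in auto)
  show ?thesis by (rule main)
qed

end
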